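(* Let $G$ be an abelian Hausdorff topological group in which every cyclic subgroup is discrete. The following are equivalent: (i) $G$ contains an infinite absolutely Cauchy summable set; (ii) $G$ contains a subgroup topologically isomorphic to $S_A$ for some infinite subset $A$ of $G\setminus\{0\}$.
   Context: For $a\in G$, $\langle a\rangle$ is the cyclic subgroup generated by $a$ with the subspace topology. For $A\subseteq G\setminus\{0\}$, $S_A=\bigoplus_{a\in A}\langle a\rangle$ is the subgroup of finitely supported elements of the product $\prod_{a\in A}\langle a\rangle$, with the subspace topology of the Tychonoff product topology. $A\subseteq G$ is absolutely Cauchy summable if for every neighbourhood $U$ of $0$ there is a finite $F\subseteq A$ such that the subgroup generated by $A\setminus F$ is contained in $U$. *)

theory Defs
  imports "HOL-Analysis.Analysis"
begin

definition is_subgroup :: "'a::ab_group_add set \<Rightarrow> bool" where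
  "is_subgroup H \<longleftrightarrow> 0 \<in> H \<and> (\<forall>x\<in>H. \<forall>y\<in>H. x + y \<in> H) \<and> (\<forall>x\<in>H. - x \<in> H)"

definition gen_subgroup :: "'a::ab_group_add set \<Rightarrow> 'a set" where
  "gen_subgroup S = \<Inter>{H. is_subgroup H \<and> S \<subseteq> H}"

definition cyclic :: "'a::ab_group_add \<Rightarrow> 'a set" where
  "cyclic a = gen_subgroup {a}"

definition discrete_subspace :: "'a::topological_space set \<Rightarrow> bool" where
  "discrete_subspace S \<longleftrightarrow> (\<forall>x\<in>S. \<exists>U. open U \<and> U \<inter> S = {x})"

definition abs_cauchy_summable :: "'a::{ab_group_add,topological_space} set \<Rightarrow> bool" where
  "abs_cauchy_summable A \<longleftrightarrow>
     (\<forall>U. (\<exists>V. open V \<and> 0 \<in> V \<and> V \<subseteq> U) \<longrightarrow>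
        (\<exists>F. finite F \<and> F \<subseteq> A \<and> gen_subgroup (A - F) \<subseteq> U))"

text \<open>Carrier of S_A: finitely supported elements of the product of the cyclic
  subgroups (as extensional functions on A).\<close>
definition SA_carrier :: "'a::ab_group_add set \<Rightarrow> ('a \<Rightarrow> 'a) set" where
  "SA_carrier A = {f \<in> PiE A cyclic. finite {a \<in> A. f a \<noteq> 0}}"

definition SA_topology :: "'a::{ab_group_add,topological_space} set \<Rightarrow> ('a \<Rightarrow> 'a) topology" where
  "SA_topology A = subtopology (product_topology (\<lambda>a. subtopology euclidean (cyclic a)) A) (SA_carrier A)"

definition SA_add :: "'a set \<Rightarrow> ('a \<Rightarrow> 'a::ab_group_add) \<Rightarrow> ('a \<Rightarrow> 'a) \<Rightarrow> ('a \<Rightarrow> 'a)" where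
  "SA_add A f g = (\<lambda>a\<in>A. f a + g a)"

definition contains_copy_of_SA :: "'a::{ab_group_add,topological_space} set \<Rightarrow> bool" where
  "contains_copy_of_SA A \<longleftrightarrow>
     (\<exists>(H::'a set) \<phi>. is_subgroup H \<and>
        homeomorphic_map (SA_topology A) (subtopology euclidean H) \<phi> \<and>
        (\<forall>f\<in>SA_carrier A. \<forall>g\<in>SA_carrier A. \<phi> (SA_add A f g) = \<phi> f + \<phi> g))"

end

theory Submission
  imports Defs
begin

lemma is_subgroup_gen: "is_subgroup (gen_subgroup S)"
  unfolding gen_subgroup_def is_subgroup_def by auto

lemma gen_sup: "S \<subseteq> gen_subgroup S"
  unfolding gen_subgroup_def by auto

lemma gen_least: "is_subgroup H \<Longrightarrow> S \<subseteq> H \<Longrightarrow> gen_subgroup S \<subseteq> H"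
  unfolding gen_subgroup_def by auto

lemma gen_mono: "S \<subseteq> T \<Longrightarrow> gen_subgroup S \<subseteq> gen_subgroup T"
  by (meson gen_least gen_sup is_subgroup_gen order_trans)

lemma sub_zero: "is_subgroup H \<Longrightarrow> 0 \<in> H"
  unfolding is_subgroup_def by auto
lemma sub_add: "is_subgroup H \<Longrightarrow> x \<in> H \<Longrightarrow> y \<in> H \<Longrightarrow> x + y \<in> H"
  unfolding is_subgroup_def by auto
lemma sub_neg: "is_subgroup H \<Longrightarrow> x \<in> H \<Longrightarrow> - x \<in> H"
  unfolding is_subgroup_def by auto
lemma sub_diff: "is_subgroup H \<Longrightarrow> x \<in> H \<Longrightarrow> y \<in> H \<Longrightarrow> x - y \<in> H"
  unfolding is_subgroup_def by (metis diff_conv_add_uminus)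

lemma sub_sum: "is_subgroup H \<Longrightarrow> (\<And>x. x \<in> S \<Longrightarrow> f x \<in> H) \<Longrightarrow> sum f S \<in> H"
proof (induction S rule: infinite_finite_induct)
  case (infinite A) then show ?case by (simp add: sub_zero)
next
  case empty then show ?case by (simp add: sub_zero)
next
  case (insert x F)
  then have "sum f F \<in> H" by blast
  then show ?case using insert by (simp add: sub_add)
qed

lemma cyclic_sub: "is_subgroup H \<Longrightarrow> x \<in> H \<Longrightarrow> cyclic x \<subseteq> H"
  unfolding cyclic_def by (simp add: gen_least)

lemma cyclic_subgroup: "is_subgroup (cyclic x)"
  unfolding cyclic_def by (rule is_subgroup_gen)

lemma self_cyclic: "x \<in> cyclic x"
  unfolding cyclic_def using gen_sup[of "{x}"] by blast

lemma zero_cyclic: "0 \<in> cyclic x"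
  using cyclic_subgroup sub_zero by blast

lemma nbhd_diff:
  fixes U :: "'a::topological_group_add set"
  assumes "open U" "0 \<in> U"
  shows "\<exists>V. open V \<and> 0 \<in> V \<and> (\<forall>x\<in>V. \<forall>y\<in>V. x - y \<in> U)"
proof -
  have c: "continuous_on UNIV (\<lambda>p::'a\<times>'a. fst p - snd p)"
    by (intro continuous_intros)
  have "open ((\<lambda>p::'a\<times>'a. fst p - snd p) -` U)"
    using c assms(1) continuous_on_open_vimage[of UNIV] by auto
  moreover have "(0,0) \<in> (\<lambda>p::'a\<times>'a. fst p - snd p) -` U" using assms by simp
  ultimately obtain P Q where "open P" "open Q" "(0,0) \<in> P \<times> Q"
    "P \<times> Q \<subseteq> (\<lambda>p::'a\<times>'a. fst p - snd p) -` U"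
    by (rule open_prod_elim)
  then show ?thesis
    by (intro exI[of _ "P \<inter> Q"]) auto
qed

lemma open_transl:
  fixes Ob :: "'a::topological_group_add set"
  assumes "open Ob"
  shows "open {y. c + y \<in> Ob}" "open {y. y - c \<in> Ob}"
proof -
  have "continuous_on UNIV (\<lambda>y::'a. c + y)" "continuous_on UNIV (\<lambda>y::'a. y - c)"
    by (intro continuous_intros)+
  then show "open {y. c + y \<in> Ob}" "open {y. y - c \<in> Ob}"
    using assms continuous_on_open_vimage[of UNIV "\<lambda>y::'a. c + y"]
      continuous_on_open_vimage[of UNIV "\<lambda>y::'a. y - c"] by (simp_all add: vimage_def)
qed

definition phi :: "'a::ab_group_add set \<Rightarrow> ('a \<Rightarrow> 'a) \<Rightarrow> 'a" where
  "phi A f = sum f {x\<in>A. f x \<noteq> 0}"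

lemma SA_carrierD:
  assumes "f \<in> SA_carrier A"
  shows "finite {x\<in>A. f x \<noteq> 0}" "\<And>x. x \<in> A \<Longrightarrow> f x \<in> cyclic x"
    "\<And>x. x \<notin> A \<Longrightarrow> f x = undefined" "f \<in> extensional A"
  using assms unfolding SA_carrier_def by (auto simp: PiE_iff extensional_def)

lemma SA_carrierI:
  "(\<And>x. x \<in> A \<Longrightarrow> f x \<in> cyclic x) \<Longrightarrow> f \<in> extensional A \<Longrightarrow> finite {x\<in>A. f x \<noteq> 0}
   \<Longrightarrow> f \<in> SA_carrier A"
  unfolding SA_carrier_def by (auto simp: PiE_iff)

lemma phi_eq:
  assumes "finite S" "{x\<in>A. f x \<noteq> 0} \<subseteq> S" "S \<subseteq> A"
  shows "phi A f = sum f S"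
  unfolding phi_def using assms by (intro sum.mono_neutral_left) auto

lemma SA_diff:
  assumes f: "f \<in> SA_carrier A" and g: "g \<in> SA_carrier A"
  shows "(\<lambda>x\<in>A. f x - g x) \<in> SA_carrier A"
    "phi A (\<lambda>x\<in>A. f x - g x) = phi A f - phi A g"
proof -
  define S where "S = {x\<in>A. f x \<noteq> 0} \<union> {x\<in>A. g x \<noteq> 0}"
  have S: "finite S" "S \<subseteq> A" using SA_carrierD(1)[OF f] SA_carrierD(1)[OF g] by (auto simp: S_def)
  have sub: "{x\<in>A. (\<lambda>x\<in>A. f x - g x) x \<noteq> 0} \<subseteq> S" by (auto simp: S_def)
  show "(\<lambda>x\<in>A. f x - g x) \<in> SA_carrier A"
  proof (rule SA_carrierI)
    fix x assume "x \<in> A"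
    then show "(\<lambda>x\<in>A. f x - g x) x \<in> cyclic x" using SA_carrierD(2)[OF f] SA_carrierD(2)[OF g]
      by (simp add: sub_diff cyclic_subgroup )
  next
    show "(\<lambda>x\<in>A. f x - g x) \<in> extensional A" by (simp add: )
  qed (rule finite_subset[OF sub S(1)])
  have "phi A (\<lambda>x\<in>A. f x - g x) = sum (\<lambda>x\<in>A. f x - g x) S"
    using S sub by (intro phi_eq) auto
  also have "\<dots> = sum (\<lambda>x. f x - g x) S" using S by (intro sum.cong) auto
  also have "\<dots> = sum f S - sum g S" by (simp add: sum_subtractf)
  also have "\<dots> = phi A f - phi A g" using S by (subst (1 2) phi_eq[OF S(1) _ S(2)]) (auto simp: S_def)
  finally show "phi A (\<lambda>x\<in>A. f x - g x) = phi A f - phi A g" .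
qed

lemma SA_addD:
  assumes f: "f \<in> SA_carrier A" and g: "g \<in> SA_carrier A"
  shows "SA_add A f g \<in> SA_carrier A"
    "phi A (SA_add A f g) = phi A f + phi A g"
proof -
  define S where "S = {x\<in>A. f x \<noteq> 0} \<union> {x\<in>A. g x \<noteq> 0}"
  have S: "finite S" "S \<subseteq> A" using SA_carrierD(1)[OF f] SA_carrierD(1)[OF g] by (auto simp: S_def)
  have sub: "{x\<in>A. SA_add A f g x \<noteq> 0} \<subseteq> S" by (auto simp: S_def SA_add_def)
  show "SA_add A f g \<in> SA_carrier A"
  proof (rule SA_carrierI)
    fix x assume "x \<in> A"
    then show "SA_add A f g x \<in> cyclic x" using SA_carrierD(2)[OF f] SA_carrierD(2)[OF g]
      by (simp add: sub_add cyclic_subgroup SA_add_def)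
  next
    show "SA_add A f g \<in> extensional A" by (simp add: SA_add_def)
  qed (rule finite_subset[OF sub S(1)])
  have "phi A (SA_add A f g) = sum (SA_add A f g) S"
    using S sub by (intro phi_eq) auto
  also have "\<dots> = sum (\<lambda>x. f x + g x) S" using S by (intro sum.cong) (auto simp: SA_add_def)
  also have "\<dots> = sum f S + sum g S" by (simp add: sum.distrib)
  also have "\<dots> = phi A f + phi A g" using S by (subst (1 2) phi_eq[OF S(1) _ S(2)]) (auto simp: S_def)
  finally show "phi A (SA_add A f g) = phi A f + phi A g" .
qed

lemma SA_zero: "(\<lambda>x\<in>A. 0) \<in> SA_carrier A" "phi A (\<lambda>x\<in>A. 0) = 0"
  by (auto intro!: SA_carrierI simp: zero_cyclic phi_def)

lemma topspace_SA: "topspace (SA_topology A) = SA_carrier A"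
  unfolding SA_topology_def SA_carrier_def by auto

lemma KT:
  fixes A :: "'a::{ab_group_add, topological_group_add, t2_space} set"
  assumes X1: "z \<in> Pi\<^sub>E A X"
  and z_def: "z = (\<lambda>x\<in>A. (0::'a))"
  and F_def: "F = {i. X i \<noteq> cyclic i} \<inter> A"
  and K_def: "K = {f \<in> SA_carrier A. \<forall>x\<in>F. f x = 0}"
  shows "K \<subseteq> Pi\<^sub>E A X"
    proof (rule subsetI)
      fix f assume f: "f \<in> K"
      then have fC: "f \<in> SA_carrier A" by (simp add: K_def)
      have 1: "f i \<in> X i" if i: "i \<in> A" for i
      proof (cases "i \<in> F")
        case True
        then have "f i = 0" using f by (simp add: K_def)
        moreover have "z i \<in> X i" using X1 i unfolding PiE_iff by blast
        moreover have "z i = 0" using i by (simp add: z_def)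
        ultimately show ?thesis by simp
      next
        case False
        then have "X i = cyclic i" using i unfolding F_def by blast
        then show ?thesis using SA_carrierD(2)[of f A i] fC i by simp
      qed
      have 2: "f \<in> extensional A" using SA_carrierD(4)[of f A] fC by simp
      show "f \<in> Pi\<^sub>E A X" using 1 2 by (simp add: PiE_iff)
    qed

lemma subK_lemma:
  fixes \<psi> :: "('a::ab_group_add \<Rightarrow> 'a) \<Rightarrow> 'a"
  assumes add: "\<And>f g. f \<in> SA_carrier A \<Longrightarrow> g \<in> SA_carrier A \<Longrightarrow> \<psi> (SA_add A f g) = \<psi> f + \<psi> g"
  and z0: "\<psi> (\<lambda>x\<in>A. 0) = 0"
  and FA: "F \<subseteq> A"
  and K_def: "K = {f \<in> SA_carrier A. \<forall>x\<in>F. f x = 0}"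
  shows "is_subgroup (\<psi> ` K)"
proof -
  define z where "z = (\<lambda>x\<in>A. (0::'a))"
  have zC: "z \<in> SA_carrier A" unfolding z_def by (rule SA_zero(1))
  have zK: "z \<in> K" unfolding K_def using zC FA by (auto simp: z_def)
  have negK: "\<psi> (\<lambda>x\<in>A. z x - f x) = - \<psi> f" "(\<lambda>x\<in>A. z x - f x) \<in> K" if f: "f \<in> K" for f
  proof -
    have fC: "f \<in> SA_carrier A" using f by (simp add: K_def)
    have nC: "(\<lambda>x\<in>A. z x - f x) \<in> SA_carrier A" using SA_diff(1)[OF zC fC] .
    have "SA_add A f (\<lambda>x\<in>A. z x - f x) = z"
      unfolding SA_add_def z_def by (rule ext) simp
    then have "\<psi> z = \<psi> f + \<psi> (\<lambda>x\<in>A. z x - f x)" using add[OF fC nC] by simp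
    then show "\<psi> (\<lambda>x\<in>A. z x - f x) = - \<psi> f" using z0 unfolding z_def[symmetric]
      by (metis add.commute add_eq_0_iff2 minus_unique)
    have "\<forall>x\<in>F. f x = 0" using f by (simp add: K_def)
    then show "(\<lambda>x\<in>A. z x - f x) \<in> K" using nC FA unfolding K_def z_def by auto
  qed
  show ?thesis
    unfolding is_subgroup_def
  proof (intro conjI ballI)
    show "0 \<in> \<psi> ` K" using zK z0 unfolding z_def[symmetric] by (metis image_eqI)
  next
    fix x y assume "x \<in> \<psi> ` K" "y \<in> \<psi> ` K"
    then obtain f g where fg: "f \<in> K" "g \<in> K" "x = \<psi> f" "y = \<psi> g" by blast
    have fC: "f \<in> SA_carrier A" and gC: "g \<in> SA_carrier A" using fg by (simp_all add: K_def)
    have "\<forall>x\<in>F. f x = 0" "\<forall>x\<in>F. g x = 0" using fg by (simp_all add: K_def)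
    then have "\<forall>x\<in>F. SA_add A f g x = 0" using FA by (auto simp: SA_add_def)
    then have "SA_add A f g \<in> K" using SA_addD(1)[OF fC gC] unfolding K_def by blast
    moreover have "\<psi> (SA_add A f g) = x + y" using fg add[OF fC gC] by simp
    ultimately show "x + y \<in> \<psi> ` K" by (metis image_eqI)
  next
    fix x assume "x \<in> \<psi> ` K"
    then obtain f where f: "f \<in> K" "x = \<psi> f" by blast
    then show "- x \<in> \<psi> ` K" using negK[OF f(1)] by (metis image_eqI)
  qed
qed


lemma ii_to_i:
  fixes A :: "'a::{ab_group_add, topological_group_add, t2_space} set"
  assumes infA: "infinite A" and A0: "0 \<notin> A" and cp: "contains_copy_of_SA A"
  shows "\<exists>B::'a set. infinite B \<and> abs_cauchy_summable B"
proof -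
  obtain H :: "'a set" and \<psi> where H: "is_subgroup H"
    and hm: "homeomorphic_map (SA_topology A) (subtopology euclidean H) \<psi>"
    and add: "\<And>f g. f \<in> SA_carrier A \<Longrightarrow> g \<in> SA_carrier A \<Longrightarrow> \<psi> (SA_add A f g) = \<psi> f + \<psi> g"
    using cp unfolding contains_copy_of_SA_def by metis
  have inj: "inj_on \<psi> (SA_carrier A)" using homeomorphic_imp_injective_map[OF hm] by (simp add: topspace_SA)
  have cm: "continuous_map (SA_topology A) (subtopology euclidean H) \<psi>"
    using hm homeomorphic_imp_continuous_map by blast
  define z where "z = (\<lambda>x\<in>A. (0::'a))"
  have zC: "z \<in> SA_carrier A" unfolding z_def by (rule SA_zero(1))
  have "SA_add A z z = z" unfolding SA_add_def z_def by (rule ext) simp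
  then have "\<psi> z = \<psi> z + \<psi> z" using add[OF zC zC] by simp
  then have z0: "\<psi> z = 0" by simp
  define e where "e a = (\<lambda>x\<in>A. if x = a then a else 0)" for a
  have eC: "e a \<in> SA_carrier A" if "a \<in> A" for a
    unfolding e_def by (rule SA_carrierI) (auto simp: self_cyclic zero_cyclic)
  define B where "B = (\<lambda>a. \<psi> (e a)) ` A"
  have injB: "inj_on (\<lambda>a. \<psi> (e a)) A"
  proof (rule inj_onI)
    fix a b assume ab: "a \<in> A" "b \<in> A" "\<psi> (e a) = \<psi> (e b)"
    then have "e a = e b" using inj eC by (meson inj_onD)
    then have "e a a = e b a" by simp
    then show "a = b" using ab A0 unfolding e_def by (auto split: if_splits)
  qed
  have infB: "infinite B" unfolding B_def using infA injB finite_imageD by blast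
  have "abs_cauchy_summable B"
    unfolding abs_cauchy_summable_def
  proof (intro allI impI)
    fix U :: "'a set" assume "\<exists>V. open V \<and> 0 \<in> V \<and> V \<subseteq> U"
    then obtain V where V: "open V" "0 \<in> V" "V \<subseteq> U" by blast
    have "openin (subtopology euclidean H) (V \<inter> H)"
      using openin_open_Int[OF V(1), of H] by (simp add: Int_commute)
    then have "openin (SA_topology A) {x \<in> topspace (SA_topology A). \<psi> x \<in> V \<inter> H}"
      by (rule openin_continuous_map_preimage[OF cm])
    then have "openin (SA_topology A) {f \<in> SA_carrier A. \<psi> f \<in> V \<inter> H}"
      by (simp add: topspace_SA)
    then obtain T where T: "openin (product_topology (\<lambda>a. subtopology euclidean (cyclic a)) A) T"
      "{f \<in> SA_carrier A. \<psi> f \<in> V \<inter> H} = T \<inter> SA_carrier A"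
      unfolding SA_topology_def openin_subtopology by (elim exE conjE) (rule that)
    have "z \<in> {f \<in> SA_carrier A. \<psi> f \<in> V \<inter> H}" using zC z0 V(2) sub_zero[OF H] by simp
    then have "z \<in> T \<inter> SA_carrier A" unfolding T(2) .
    then have "z \<in> T" by (rule IntD1)
    from product_topology_open_contains_basis[OF T(1) this]
    obtain X where X: "z \<in> Pi\<^sub>E A X" "\<And>i. openin (subtopology euclidean (cyclic i)) (X i)"
      "finite {i. X i \<noteq> topspace (subtopology euclidean (cyclic i))}" "Pi\<^sub>E A X \<subseteq> T"
      by blast
    define F where "F = {i. X i \<noteq> cyclic i} \<inter> A"
    have FA: "F \<subseteq> A" unfolding F_def by blast
    have finF: "finite F" using X(3) unfolding F_def by (simp add: finite_Int)
    define K where "K = {f \<in> SA_carrier A. \<forall>x\<in>F. f x = 0}"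
    have KT: "K \<subseteq> Pi\<^sub>E A X" by (rule KT[OF X(1) z_def F_def K_def])
    have KV: "\<psi> ` K \<subseteq> V"
    proof
      fix y assume "y \<in> \<psi> ` K"
      then obtain f where f: "f \<in> K" "y = \<psi> f" by blast
      have fC: "f \<in> SA_carrier A" using f(1) by (simp add: K_def)
      have "f \<in> T" using KT X(4) f(1) by blast
      then have "f \<in> T \<inter> SA_carrier A" using fC by (rule IntI)
      then have "f \<in> {f \<in> SA_carrier A. \<psi> f \<in> V \<inter> H}" unfolding T(2) .
      then show "y \<in> V" using f(2) by simp
    qed
    have subK: "is_subgroup (\<psi> ` K)"
      by (rule subK_lemma[OF add z0[unfolded z_def] FA K_def])
    define F' where "F' = (\<lambda>a. \<psi> (e a)) ` F"
    have "B - F' \<subseteq> \<psi> ` K"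
    proof
      fix b assume "b \<in> B - F'"
      then obtain a where a: "a \<in> A" "a \<notin> F" "b = \<psi> (e a)" unfolding B_def F'_def by blast
      have "\<forall>x\<in>F. e a x = 0" using a(2) FA unfolding e_def by auto
      then have "e a \<in> K" using eC[OF a(1)] unfolding K_def by blast
      then show "b \<in> \<psi> ` K" using a by blast
    qed
    then have "gen_subgroup (B - F') \<subseteq> U" using gen_least[OF subK] KV V(3) by blast
    moreover have "finite F'" "F' \<subseteq> B" using finF FA unfolding F'_def B_def by auto
    ultimately show "\<exists>F. finite F \<and> F \<subseteq> B \<and> gen_subgroup (B - F) \<subseteq> U" by blast
  qed
  then have "infinite B \<and> abs_cauchy_summable B" using infB by simp
  then show ?thesis by (rule exI)
qed


lemma step_ex:
  fixes B :: "'a::{ab_group_add, topological_group_add, t2_space} set"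
  assumes disc: "\<forall>a::'a. discrete_subspace (cyclic a)"
    and infB: "infinite B" and acs: "abs_cauchy_summable B" and finE: "finite E"
  shows "\<exists>x F V. x \<in> B \<and> x \<notin> E \<and> x \<noteq> 0 \<and> finite F \<and> open V \<and> 0 \<in> V \<and>
     gen_subgroup (B - insert x (E \<union> F)) \<subseteq> V \<and> (\<forall>y\<in>cyclic x. \<forall>t\<in>V. y + t \<in> V \<longrightarrow> y = 0)"
proof -
  have "infinite (B - insert 0 E)" using infB finE by simp
  then obtain x where x: "x \<in> B - insert 0 E" using infinite_imp_nonempty by blast
  have "\<exists>U. open U \<and> U \<inter> cyclic x = {0}"
    using disc zero_cyclic[of x] unfolding discrete_subspace_def by blast
  then obtain U where U: "open U" "U \<inter> cyclic x = {0}" by blast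
  then have "0 \<in> U" by blast
  from nbhd_diff[OF U(1) this] obtain V where V: "open V" "0 \<in> V" "\<forall>p\<in>V. \<forall>q\<in>V. p - q \<in> U"
    by blast
  have "\<exists>F. finite F \<and> F \<subseteq> B \<and> gen_subgroup (B - F) \<subseteq> V"
    using acs V(1,2) unfolding abs_cauchy_summable_def by blast
  then obtain F where F: "finite F" "gen_subgroup (B - F) \<subseteq> V" by blast
  have "gen_subgroup (B - insert x (E \<union> F)) \<subseteq> gen_subgroup (B - F)"
    by (rule gen_mono) blast
  then have G: "gen_subgroup (B - insert x (E \<union> F)) \<subseteq> V" using F(2) by (rule order_trans)
  have S: "\<forall>y\<in>cyclic x. \<forall>t\<in>V. y + t \<in> V \<longrightarrow> y = 0"
  proof (intro ballI impI)
    fix y t assume yt: "y \<in> cyclic x" "t \<in> V" "y + t \<in> V"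
    then have "(y + t) - t \<in> U" using V(3) by blast
    then have "y \<in> U" by simp
    then show "y = 0" using yt(1) U(2) by blast
  qed
  show ?thesis
    apply (rule exI[of _ x], rule exI[of _ F], rule exI[of _ V])
    using x F(1) V(1,2) G S by blast
qed

locale constr =
  fixes B :: "'a::{ab_group_add, topological_group_add, t2_space} set"
    and Es :: "nat \<Rightarrow> 'a set" and a :: "nat \<Rightarrow> 'a" and Vs :: "nat \<Rightarrow> 'a set"
  assumes acs: "abs_cauchy_summable B"
    and disc: "\<forall>x::'a. discrete_subspace (cyclic x)"
    and aB: "\<And>n. a n \<in> B" and aE: "\<And>n. a n \<notin> Es n" and a0: "\<And>n. a n \<noteq> 0"
    and Emono: "\<And>n. Es n \<subseteq> Es (Suc n)" and aES: "\<And>n. a n \<in> Es (Suc n)"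
    and Vopen: "\<And>n. open (Vs n)" and V0: "\<And>n. 0 \<in> Vs n"
    and genV: "\<And>n. gen_subgroup (B - Es (Suc n)) \<subseteq> Vs n"
    and Vsep: "\<And>n y t. y \<in> cyclic (a n) \<Longrightarrow> t \<in> Vs n \<Longrightarrow> y + t \<in> Vs n \<Longrightarrow> y = 0"
begin

lemma Emono': "m \<le> n \<Longrightarrow> Es m \<subseteq> Es n"
  by (rule lift_Suc_mono_le[of Es, OF Emono])

lemma a_notin: "n \<le> k \<Longrightarrow> a k \<notin> Es n"
  using Emono'[of n k] aE[of k] by blast

lemma inj_a: "inj a"
proof (rule injI)
  fix i j assume eq: "a i = a j"
  show "i = j"
  proof (rule ccontr)
    assume "i \<noteq> j"
    then consider "i < j" | "j < i" by linarith
    then show False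
    proof cases
      case 1
      then have "a i \<in> Es j" using aES[of i] Emono'[of "Suc i" j] by auto
      then show False using eq aE[of j] by simp
    next
      case 2
      then have "a j \<in> Es i" using aES[of j] Emono'[of "Suc j" i] by auto
      then show False using eq aE[of i] by simp
    qed
  qed
qed

lemma Q: "(\<forall>j<n. g j \<in> cyclic (a j)) \<Longrightarrow> t \<in> gen_subgroup (B - Es n) \<Longrightarrow>
    (\<Sum>j<n. g j) + t \<in> (\<Inter>k<n. Vs k) \<Longrightarrow> \<forall>j<n. g j = 0"
proof (induction n arbitrary: t)
  case 0 then show ?case by simp
next
  case (Suc n)
  have gn: "g n \<in> gen_subgroup (B - Es n)"
  proof -
    have "a n \<in> gen_subgroup (B - Es n)" using aB aE gen_sup by blast
    then have "cyclic (a n) \<subseteq> gen_subgroup (B - Es n)" by (rule cyclic_sub[OF is_subgroup_gen])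
    then show ?thesis using Suc.prems(1) by blast
  qed
  have "gen_subgroup (B - Es (Suc n)) \<subseteq> gen_subgroup (B - Es n)"
    using Emono[of n] by (intro gen_mono) blast
  then have tn: "t \<in> gen_subgroup (B - Es n)" using Suc.prems(2) by blast
  have gt: "g n + t \<in> gen_subgroup (B - Es n)" by (rule sub_add[OF is_subgroup_gen gn tn])
  have eq: "(\<Sum>j<Suc n. g j) + t = (\<Sum>j<n. g j) + (g n + t)" by (simp add: add.assoc)
  have P3: "(\<Sum>j<n. g j) + (g n + t) \<in> (\<Inter>k<Suc n. Vs k)" using Suc.prems(3) unfolding eq .
  then have "(\<Sum>j<n. g j) + (g n + t) \<in> (\<Inter>k<n. Vs k)" by auto
  moreover have pre: "\<forall>j<n. g j \<in> cyclic (a j)" using Suc.prems(1) by simp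
  ultimately have z: "\<forall>j<n. g j = 0" using Suc.IH[OF _ gt] by blast
  then have s0: "(\<Sum>j<n. g j) = 0" by simp
  have "g n + t \<in> (\<Inter>k<Suc n. Vs k)" using P3 unfolding s0 by simp
  then have "g n + t \<in> Vs n" by blast
  moreover have "t \<in> Vs n" using Suc.prems(2) genV[of n] by blast
  moreover have "g n \<in> cyclic (a n)" using Suc.prems(1) by simp
  ultimately have "g n = 0" using Vsep by blast
  then show ?case using z less_Suc_eq by auto
qed

lemma Key:
  assumes fC: "f \<in> SA_carrier (range a)" and ph: "phi (range a) f \<in> (\<Inter>k<Suc i. Vs k)"
  shows "f (a i) = 0"
proof -
  define S where "S = {x \<in> range a. f x \<noteq> 0}"
  define S1 where "S1 = a ` {..<Suc i}"
  define S2 where "S2 = S \<union> S1"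
  have finS: "finite S" unfolding S_def by (rule SA_carrierD(1)[OF fC])
  have finS2: "finite S2" unfolding S2_def S1_def using finS by simp
  have S2A: "S2 \<subseteq> range a" unfolding S2_def S1_def S_def by blast
  have "phi (range a) f = sum f S2"
    by (rule phi_eq[OF finS2 _ S2A]) (auto simp: S2_def S_def)
  also have "\<dots> = sum f (S2 - S1) + sum f S1"
    by (rule sum.subset_diff[OF _ finS2]) (simp add: S2_def)
  also have "sum f S1 = (\<Sum>j<Suc i. f (a j))"
    unfolding S1_def by (subst sum.reindex) (use inj_a in \<open>auto simp: inj_on_def\<close>)
  finally have eq: "phi (range a) f = (\<Sum>j<Suc i. f (a j)) + sum f (S2 - S1)"
    by (rule trans[OF _ add.commute])
  have t: "sum f (S2 - S1) \<in> gen_subgroup (B - Es (Suc i))"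
  proof (rule sub_sum[OF is_subgroup_gen])
    fix x assume x: "x \<in> S2 - S1"
    then obtain k where k: "x = a k" using S2A by blast
    then have "k \<notin> {..<Suc i}" using x unfolding S1_def by blast
    then have "Suc i \<le> k" by simp
    then have "a k \<notin> Es (Suc i)" by (rule a_notin)
    then have "x \<in> B - Es (Suc i)" using k aB by simp
    then have "x \<in> gen_subgroup (B - Es (Suc i))" by (rule subsetD[OF gen_sup])
    then have "cyclic x \<subseteq> gen_subgroup (B - Es (Suc i))" by (rule cyclic_sub[OF is_subgroup_gen])
    moreover have "f x \<in> cyclic x" using SA_carrierD(2)[OF fC] k by simp
    ultimately show "f x \<in> gen_subgroup (B - Es (Suc i))" by blast
  qed
  have pre: "\<forall>j<Suc i. f (a j) \<in> cyclic (a j)" using SA_carrierD(2)[OF fC] by simp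
  have "(\<Sum>j<Suc i. f (a j)) + sum f (S2 - S1) \<in> (\<Inter>k<Suc i. Vs k)" using ph unfolding eq .
  then have "\<forall>j<Suc i. f (a j) = 0" by (rule Q[OF pre t])
  then show ?thesis by simp
qed

lemma inj_phi: "inj_on (phi (range a)) (SA_carrier (range a))"
proof (rule inj_onI)
  fix f h assume f: "f \<in> SA_carrier (range a)" and h: "h \<in> SA_carrier (range a)"
    and eq: "phi (range a) f = phi (range a) h"
  define d where "d = (\<lambda>x\<in>range a. f x - h x)"
  have dC: "d \<in> SA_carrier (range a)" unfolding d_def by (rule SA_diff(1)[OF f h])
  have "phi (range a) d = 0" unfolding d_def SA_diff(2)[OF f h] eq by simp
  then have pd: "phi (range a) d \<in> (\<Inter>k<Suc i. Vs k)" for i using V0 by simp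
  show "f = h"
  proof (rule extensionalityI[OF SA_carrierD(4)[OF f] SA_carrierD(4)[OF h]])
    fix x assume "x \<in> range a"
    then obtain i where i: "x = a i" by blast
    have "d (a i) = 0" by (rule Key[OF dC pd])
    then show "f x = h x" unfolding d_def i by simp
  qed
qed

lemma subgroup_H: "is_subgroup (phi (range a) ` SA_carrier (range a))"
  unfolding is_subgroup_def
proof (intro conjI ballI)
  show "0 \<in> phi (range a) ` SA_carrier (range a)"
    using SA_zero(2)[of "range a", symmetric] SA_zero(1) by (rule image_eqI)
next
  fix x y assume "x \<in> phi (range a) ` SA_carrier (range a)" "y \<in> phi (range a) ` SA_carrier (range a)"
  then obtain f g where fg: "f \<in> SA_carrier (range a)" "g \<in> SA_carrier (range a)"
    "x = phi (range a) f" "y = phi (range a) g" by blast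
  have "x + y = phi (range a) (SA_add (range a) f g)" using SA_addD(2)[OF fg(1,2)] fg(3,4) by simp
  then show "x + y \<in> phi (range a) ` SA_carrier (range a)" using SA_addD(1)[OF fg(1,2)] by (rule image_eqI)
next
  fix x assume "x \<in> phi (range a) ` SA_carrier (range a)"
  then obtain f where f: "f \<in> SA_carrier (range a)" "x = phi (range a) f" by blast
  define z where "z = (\<lambda>x\<in>range a. (0::'a))"
  have zC: "z \<in> SA_carrier (range a)" unfolding z_def by (rule SA_zero(1))
  have z0: "phi (range a) z = 0" unfolding z_def by (rule SA_zero(2))
  define n where "n = (\<lambda>y\<in>range a. z y - f y)"
  have nC: "n \<in> SA_carrier (range a)" unfolding n_def by (rule SA_diff(1)[OF zC f(1)])
  have "phi (range a) n = phi (range a) z - phi (range a) f" unfolding n_def by (rule SA_diff(2)[OF zC f(1)])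
  then have "- x = phi (range a) n" using z0 f(2) by simp
  then show "- x \<in> phi (range a) ` SA_carrier (range a)" using nC by (rule image_eqI)
qed

lemma cont_phi:
  "continuous_map (SA_topology (range a)) (top_of_set (phi (range a) ` SA_carrier (range a))) (phi (range a))"
proof -
  define A where "A = range a"
  define C where "C = SA_carrier A"
  have AB: "A \<subseteq> B" unfolding A_def using aB by blast
  have "continuous_map (SA_topology A) euclidean (phi A)"
    unfolding continuous_map_def
  proof (intro conjI allI impI)
    show "phi A \<in> topspace (SA_topology A) \<rightarrow> topspace euclidean" by simp
  next
    fix Ob :: "'a set" assume "openin euclidean Ob"
    then have Ob: "open Ob" by simp
    show "openin (SA_topology A) {x \<in> topspace (SA_topology A). phi A x \<in> Ob}"
      unfolding topspace_SA
    proof (subst openin_subopen, intro ballI)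
      fix f0 assume f0: "f0 \<in> {x \<in> SA_carrier A. phi A x \<in> Ob}"
      then have f0C: "f0 \<in> SA_carrier A" and f0O: "phi A f0 \<in> Ob" by simp_all
      define O' where "O' = {y. phi A f0 + y \<in> Ob}"
      have "open O'" unfolding O'_def by (rule open_transl(1)[OF Ob])
      moreover have "0 \<in> O'" unfolding O'_def using f0O by simp
      ultimately have "\<exists>F. finite F \<and> F \<subseteq> B \<and> gen_subgroup (B - F) \<subseteq> O'"
        using acs unfolding abs_cauchy_summable_def by blast
      then obtain F where F: "finite F" "gen_subgroup (B - F) \<subseteq> O'" by blast
      define Xs where "Xs i = (if i \<in> F \<inter> A then {f0 i} else cyclic i)" for i
      define N where "N = Pi\<^sub>E A Xs \<inter> SA_carrier A"
      have opX: "openin (top_of_set (cyclic i)) (Xs i)" for i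
      proof (cases "i \<in> F \<inter> A")
        case True
        then have "f0 i \<in> cyclic i" using SA_carrierD(2)[OF f0C] by blast
        then have "\<exists>U. open U \<and> U \<inter> cyclic i = {f0 i}"
          using disc unfolding discrete_subspace_def by blast
        then obtain U where "open U" "U \<inter> cyclic i = {f0 i}" by blast
        then show ?thesis unfolding openin_open Xs_def using True by (intro exI[of _ U]) auto
      next
        case False
        then show ?thesis unfolding openin_open Xs_def by (intro exI[of _ UNIV]) auto
      qed
      have "finite {i. Xs i \<noteq> topspace (top_of_set (cyclic i))}"
        by (rule finite_subset[OF _ F(1)]) (auto simp: Xs_def)
      then have "openin (product_topology (\<lambda>a. top_of_set (cyclic a)) A) (Pi\<^sub>E A Xs)"
        using opX by (intro product_topology_basis) auto
      then have opN: "openin (SA_topology A) N"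
        unfolding SA_topology_def N_def openin_subtopology by blast
      have f0N: "f0 \<in> N"
        unfolding N_def using f0C SA_carrierD(2,4)[OF f0C] by (auto simp: Xs_def PiE_iff)
      have NO: "N \<subseteq> {x \<in> SA_carrier A. phi A x \<in> Ob}"
      proof
        fix f assume f: "f \<in> N"
        then have fC: "f \<in> SA_carrier A" by (simp add: N_def)
        have fX: "f i = f0 i" if "i \<in> F" "i \<in> A" for i
        proof -
          have "f \<in> Pi\<^sub>E A Xs" using f by (simp add: N_def)
          then have "f i \<in> Xs i" using that(2) by (rule PiE_mem)
          then show ?thesis using that by (simp add: Xs_def)
        qed
        define d where "d = (\<lambda>x\<in>A. f x - f0 x)"
        have dC: "d \<in> SA_carrier A" unfolding d_def by (rule SA_diff(1)[OF fC f0C])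
        have pd: "phi A d = phi A f - phi A f0" unfolding d_def by (rule SA_diff(2)[OF fC f0C])
        have "phi A d \<in> gen_subgroup (B - F)"
          unfolding phi_def
        proof (rule sub_sum[OF is_subgroup_gen])
          fix x assume x: "x \<in> {x \<in> A. d x \<noteq> 0}"
          then have xA: "x \<in> A" and dx: "d x \<noteq> 0" by simp_all
          have "x \<notin> F" using fX[of x] xA dx unfolding d_def by auto
          then have "x \<in> B - F" using xA AB by blast
          then have "x \<in> gen_subgroup (B - F)" by (rule subsetD[OF gen_sup])
          then have "cyclic x \<subseteq> gen_subgroup (B - F)" by (rule cyclic_sub[OF is_subgroup_gen])
          moreover have "d x \<in> cyclic x" using SA_carrierD(2)[OF dC xA] .
          ultimately show "d x \<in> gen_subgroup (B - F)" by blast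
        qed
        then have "phi A d \<in> O'" using F(2) by blast
        then have "phi A f0 + (phi A f - phi A f0) \<in> Ob" unfolding O'_def pd by simp
        then have "phi A f \<in> Ob" by simp
        then show "f \<in> {x \<in> SA_carrier A. phi A x \<in> Ob}" using fC by simp
      qed
      show "\<exists>T. openin (SA_topology A) T \<and> f0 \<in> T \<and> T \<subseteq> {x \<in> SA_carrier A. phi A x \<in> Ob}"
        using opN f0N NO by blast
    qed
  qed
  then show ?thesis unfolding A_def[symmetric] continuous_map_in_subtopology
    by (simp add: topspace_SA)
qed

lemma cont_inv:
  "continuous_map (top_of_set (phi (range a) ` SA_carrier (range a))) (SA_topology (range a))
     (inv_into (SA_carrier (range a)) (phi (range a)))"
proof -
  define A where "A = range a"
  define C where "C = SA_carrier A"
  define H where "H = phi A ` C"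
  define g where "g = inv_into C (phi A)"
  have gC: "g y \<in> C" if "y \<in> H" for y
    unfolding g_def using that unfolding H_def by (rule inv_into_into)
  have pg: "phi A (g y) = y" if "y \<in> H" for y
    unfolding g_def using that unfolding H_def by (rule f_inv_into_f)
  have coord: "continuous_map (top_of_set H) (top_of_set (cyclic i)) (\<lambda>y. g y i)" if iA: "i \<in> A" for i
  proof -
    obtain k where k: "i = a k" using iA unfolding A_def by blast
    define W where "W = (\<Inter>j<Suc k. Vs j)"
    have Wo: "open W" unfolding W_def using Vopen by (intro open_INT) auto
    have W0: "0 \<in> W" unfolding W_def using V0 by blast
    have "continuous_map (top_of_set H) euclidean (\<lambda>y. g y i)"
      unfolding continuous_map_def
    proof (intro conjI allI impI)
      show "(\<lambda>y. g y i) \<in> topspace (top_of_set H) \<rightarrow> topspace euclidean" by simp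
    next
      fix U :: "'a set" assume "openin euclidean U"
      show "openin (top_of_set H) {x \<in> topspace (top_of_set H). g x i \<in> U}"
        unfolding topspace_euclidean_subtopology
      proof (subst openin_subopen, intro ballI)
        fix y0 assume y0: "y0 \<in> {x \<in> H. g x i \<in> U}"
        then have y0H: "y0 \<in> H" and y0U: "g y0 i \<in> U" by simp_all
        define N where "N = H \<inter> {y. y - y0 \<in> W}"
        have opN: "openin (top_of_set H) N" unfolding N_def
          by (rule openin_open_Int[OF open_transl(2)[OF Wo]])
        have y0N: "y0 \<in> N" unfolding N_def using y0H W0 by simp
        have NS: "N \<subseteq> {x \<in> H. g x i \<in> U}"
        proof
          fix y assume y: "y \<in> N"
          then have yH: "y \<in> H" and yW: "y - y0 \<in> W" by (simp_all add: N_def)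
          have fC: "g y \<in> SA_carrier (range a)" using gC[OF yH] by (simp add: C_def A_def)
          have f0C: "g y0 \<in> SA_carrier (range a)" using gC[OF y0H] by (simp add: C_def A_def)
          define d where "d = (\<lambda>x\<in>range a. g y x - g y0 x)"
          have dC: "d \<in> SA_carrier (range a)" unfolding d_def by (rule SA_diff(1)[OF fC f0C])
          have "phi (range a) d = phi (range a) (g y) - phi (range a) (g y0)"
            unfolding d_def by (rule SA_diff(2)[OF fC f0C])
          also have "\<dots> = y - y0" using pg[OF yH] pg[OF y0H] by (simp add: A_def)
          finally have "phi (range a) d \<in> (\<Inter>j<Suc k. Vs j)" using yW by (simp add: W_def)
          then have "d (a k) = 0" by (rule Key[OF dC])
          then have "g y i = g y0 i" unfolding d_def k by simp
          then show "y \<in> {x \<in> H. g x i \<in> U}" using yH y0U by simp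
        qed
        show "\<exists>T. openin (top_of_set H) T \<and> y0 \<in> T \<and> T \<subseteq> {x \<in> H. g x i \<in> U}"
          using opN y0N NS by blast
      qed
    qed
    moreover have "(\<lambda>y. g y i) \<in> topspace (top_of_set H) \<rightarrow> cyclic i"
    proof
      fix y assume "y \<in> topspace (top_of_set H)"
      then have "g y \<in> C" using gC by simp
      then show "g y i \<in> cyclic i" using iA unfolding C_def by (rule SA_carrierD(2))
    qed
    ultimately show ?thesis unfolding continuous_map_in_subtopology by blast
  qed
  have "continuous_map (top_of_set H) (product_topology (\<lambda>a. top_of_set (cyclic a)) A) g"
  proof (rule continuous_map_coordinatewise_then_product)
    fix i assume "i \<in> A" then show "continuous_map (top_of_set H) (top_of_set (cyclic i)) (\<lambda>x. g x i)"
      by (rule coord)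
  next
    fix i x assume "i \<notin> A" "x \<in> topspace (top_of_set H)"
    then have "g x \<in> C" using gC by simp
    then show "g x i = undefined" using \<open>i \<notin> A\<close> unfolding C_def by (rule SA_carrierD(3))
  qed
  moreover have "g \<in> topspace (top_of_set H) \<rightarrow> C" using gC by simp
  ultimately have "continuous_map (top_of_set H) (SA_topology A) g"
    unfolding SA_topology_def continuous_map_in_subtopology C_def by blast
  then show ?thesis unfolding g_def H_def C_def A_def .
qed

lemma homeo:
  "homeomorphic_map (SA_topology (range a)) (top_of_set (phi (range a) ` SA_carrier (range a))) (phi (range a))"
  unfolding homeomorphic_map_maps homeomorphic_maps_def
proof (intro exI[of _ "inv_into (SA_carrier (range a)) (phi (range a))"] conjI ballI)
  show "continuous_map (SA_topology (range a)) (top_of_set (phi (range a) ` SA_carrier (range a))) (phi (range a))"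
    by (rule cont_phi)
  show "continuous_map (top_of_set (phi (range a) ` SA_carrier (range a))) (SA_topology (range a))
     (inv_into (SA_carrier (range a)) (phi (range a)))" by (rule cont_inv)
next
  fix x assume "x \<in> topspace (SA_topology (range a))"
  then have "x \<in> SA_carrier (range a)" by (simp add: topspace_SA)
  then show "inv_into (SA_carrier (range a)) (phi (range a)) (phi (range a) x) = x"
    by (rule inv_into_f_f[OF inj_phi])
next
  fix y assume "y \<in> topspace (top_of_set (phi (range a) ` SA_carrier (range a)))"
  then have "y \<in> phi (range a) ` SA_carrier (range a)" by simp
  then show "phi (range a) (inv_into (SA_carrier (range a)) (phi (range a)) y) = y"
    by (rule f_inv_into_f)
qed

lemma copy: "contains_copy_of_SA (range a)"
  unfolding contains_copy_of_SA_def
proof (intro exI[of _ "phi (range a) ` SA_carrier (range a)"] exI[of _ "phi (range a)"] conjI ballI)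
  show "is_subgroup (phi (range a) ` SA_carrier (range a))" by (rule subgroup_H)
  show "homeomorphic_map (SA_topology (range a)) (top_of_set (phi (range a) ` SA_carrier (range a))) (phi (range a))"
    by (rule homeo)
next
  fix f g assume "f \<in> SA_carrier (range a)" "g \<in> SA_carrier (range a)"
  then show "phi (range a) (SA_add (range a) f g) = phi (range a) f + phi (range a) g"
    by (rule SA_addD(2))
qed

end

lemma i_to_ii:
  fixes B :: "'a::{ab_group_add, topological_group_add, t2_space} set"
  assumes disc: "\<forall>a::'a. discrete_subspace (cyclic a)"
    and infB: "infinite B" and acs: "abs_cauchy_summable B"
  shows "\<exists>A::'a set. infinite A \<and> 0 \<notin> A \<and> contains_copy_of_SA A"
proof -
  define P where "P E x F V \<longleftrightarrow> x \<in> B \<and> x \<notin> E \<and> x \<noteq> 0 \<and> finite F \<and> open V \<and> 0 \<in> V \<and>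
     gen_subgroup (B - insert x (E \<union> F)) \<subseteq> V \<and> (\<forall>y\<in>cyclic x. \<forall>t\<in>V. y + t \<in> V \<longrightarrow> y = 0)"
    for E x F V
  have "\<forall>E. \<exists>p. finite E \<longrightarrow> P E (fst p) (fst (snd p)) (snd (snd p))"
  proof
    fix E :: "'a set"
    show "\<exists>p. finite E \<longrightarrow> P E (fst p) (fst (snd p)) (snd (snd p))"
    proof (cases "finite E")
      case True
      from step_ex[OF disc infB acs True] obtain x F V where "P E x F V"
        unfolding P_def by blast
      then show ?thesis by (intro exI[of _ "(x, F, V)"]) simp
    next
      case False then show ?thesis by simp
    qed
  qed
  then obtain s where s: "\<And>E. finite E \<Longrightarrow> P E (fst (s E)) (fst (snd (s E))) (snd (snd (s E)))"
    by (metis choice)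
  define nx where "nx E = fst (s E)" for E
  define nF where "nF E = fst (snd (s E))" for E
  define nV where "nV E = snd (snd (s E))" for E
  define Es where "Es = rec_nat {} (\<lambda>_ e. insert (nx e) (e \<union> nF e))"
  have Es0: "Es 0 = {}" by (simp add: Es_def)
  have EsS: "Es (Suc n) = insert (nx (Es n)) (Es n \<union> nF (Es n))" for n by (simp add: Es_def)
  have Pn: "finite (Es n) \<and> P (Es n) (nx (Es n)) (nF (Es n)) (nV (Es n))" for n
  proof (induction n)
    case 0
    have "finite (Es 0)" by (simp add: Es0)
    then show ?case using s unfolding nx_def nF_def nV_def by blast
  next
    case (Suc n)
    then have "finite (nF (Es n))" unfolding P_def by blast
    then have "finite (Es (Suc n))" using Suc.IH unfolding EsS by blast
    then show ?case using s unfolding nx_def nF_def nV_def by blast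
  qed
  define a where "a n = nx (Es n)" for n
  define Vs where "Vs n = nV (Es n)" for n
  interpret constr B Es a Vs
  proof
    show "abs_cauchy_summable B" by (rule acs)
    show "\<forall>x::'a. discrete_subspace (cyclic x)" by (rule disc)
    fix n
    have p: "P (Es n) (a n) (nF (Es n)) (Vs n)" using Pn[of n] unfolding a_def Vs_def by blast
    show "a n \<in> B" using p unfolding P_def by blast
    show "a n \<notin> Es n" using p unfolding P_def by blast
    show "a n \<noteq> 0" using p unfolding P_def by blast
    show "Es n \<subseteq> Es (Suc n)" unfolding EsS by blast
    show "a n \<in> Es (Suc n)" unfolding EsS a_def by blast
    show "open (Vs n)" using p unfolding P_def by blast
    show "0 \<in> Vs n" using p unfolding P_def by blast
    have "gen_subgroup (B - insert (a n) (Es n \<union> nF (Es n))) \<subseteq> Vs n" using p unfolding P_def by blast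
    then show "gen_subgroup (B - Es (Suc n)) \<subseteq> Vs n" unfolding EsS a_def .
    fix y t assume "y \<in> cyclic (a n)" "t \<in> Vs n" "y + t \<in> Vs n"
    then show "y = 0" using p unfolding P_def by blast
  qed
  have "infinite (range a)"
  proof
    assume "finite (range a)"
    then have "finite (UNIV :: nat set)" using finite_imageD inj_a by blast
    then show False by simp
  qed
  moreover have "0 \<notin> range a" using a0 by (metis imageE)
  ultimately have "infinite (range a) \<and> 0 \<notin> range a \<and> contains_copy_of_SA (range a)"
    using copy by blast
  then show ?thesis by (rule exI)
qed

theorem corollary5p6:
  assumes "\<forall>a::'a::{ab_group_add, topological_group_add, t2_space}. discrete_subspace (cyclic a)"
  shows "(\<exists>B::'a set. infinite B \<and> abs_cauchy_summable B) \<longleftrightarrow>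
         (\<exists>A::'a set. infinite A \<and> 0 \<notin> A \<and> contains_copy_of_SA A)"
proof
  assume "\<exists>B::'a set. infinite B \<and> abs_cauchy_summable B"
  then obtain B :: "'a set" where "infinite B" "abs_cauchy_summable B" by blast
  then show "\<exists>A::'a set. infinite A \<and> 0 \<notin> A \<and> contains_copy_of_SA A"
    by (rule i_to_ii[OF assms])
next
  assume "\<exists>A::'a set. infinite A \<and> 0 \<notin> A \<and> contains_copy_of_SA A"
  then obtain A :: "'a set" where "infinite A" "0 \<notin> A" "contains_copy_of_SA A" by blast
  then show "\<exists>B::'a set. infinite B \<and> abs_cauchy_summable B" by (rule ii_to_i)
qed

end
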